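(* Let $ABC$ be a triangle and let $P$ be a point. Let $H_A, H_B, H_C$ be the orthocenters of the triangles $BPC$, $CPA$, $PAB$ respectively. Let $G_A, G_B, G_C$ be the centroids of the triangles $AH_BH_C$, $BH_CH_A$, $CH_AH_B$ respectively, and let $G$ be the centroid of $ABC$. Then $G_A, G_B, G_C, G$ lie on a circle.
   Context: All triangles involved are assumed nondegenerate. *)

theory Defs
  imports "HOL-Analysis.Analysis"
begin

type_synonym point = "real ^ 2"

text \<open>It is well defined for nondegenerate triangles.\<close>
definition orthocenter :: "point \<Rightarrow> point \<Rightarrow> point \<Rightarrow> point" where
  "orthocenter A B C =
     (THE H. inner (H - A) (B - C) = 0 \<and> inner (H - B) (C - A) = 0)"

definition centroid :: "point \<Rightarrow> point \<Rightarrow> point \<Rightarrow> point" where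
  "centroid A B C = (1/3) *\<^sub>R (A + B + C)"

definition concyclic :: "point set \<Rightarrow> bool" where
  "concyclic S \<longleftrightarrow> (\<exists>c r. r > 0 \<and> (\<forall>X\<in>S. dist X c = r))"

end

theory Submission
  imports Defs
begin

definition cr :: "point \<Rightarrow> point \<Rightarrow> real" where
  "cr u v = u$1 * v$2 - u$2 * v$1"

lemma inner2: "inner (x::point) y = x$1*y$1 + x$2*y$2"
  by (simp add: inner_vec_def sum_2)

lemma dist2: "dist (X::point) Y = sqrt ((X$1-Y$1)^2 + (X$2-Y$2)^2)"
  by (simp add: dist_norm norm_eq_sqrt_inner inner2 power2_eq_square)

lemma noncol:
  assumes "\<not> collinear {x, y, z::point}"
  shows "cr (x - y) (z - y) \<noteq> 0"
proof
  assume h: "cr (x - y) (z - y) = 0"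
  define u where "u = x - y"
  define v where "v = z - y"
  have c0: "u$1 * v$2 - u$2 * v$1 = 0" using h by (simp add: cr_def u_def v_def)
  have "collinear {0, u, v}"
  proof (cases "u = 0")
    case True then show ?thesis by (simp add: collinear_lemma)
  next
    case False
    then have "u$1 \<noteq> 0 \<or> u$2 \<noteq> 0" by (metis exhaust_2 vec_eq_iff zero_index)
    then obtain c where "v = c *\<^sub>R u"
    proof
      assume u1: "u$1 \<noteq> 0"
      have "v = (v$1/u$1) *\<^sub>R u"
        unfolding vec_eq_iff forall_2 using u1 c0 by (simp add: field_simps)
      then show ?thesis using that by blast
    next
      assume u2: "u$2 \<noteq> 0"
      have "v = (v$2/u$2) *\<^sub>R u"
        unfolding vec_eq_iff forall_2 using u2 c0 by (simp add: field_simps)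
      then show ?thesis using that by blast
    qed
    then show ?thesis by (auto simp: collinear_lemma)
  qed
  then have "collinear {x, y, z}"
    using collinear_3[of x y z] by (simp add: u_def v_def)
  with assms show False by simp
qed

lemma lin2:
  fixes d1 d2 u1 u2 y1 y2 :: real
  assumes "d1*u1 + d2*u2 = 0" "d1*y1+d2*y2=0" "u1*y2-u2*y1 \<noteq> 0"
  shows "d1 = 0 \<and> d2 = 0"
proof -
  have "d1*(u1*y2-u2*y1) = y2*(d1*u1+d2*u2) - u2*(d1*y1+d2*y2)" by algebra
  moreover have "d2*(u1*y2-u2*y1) = u1*(d1*y1+d2*y2) - y1*(d1*u1+d2*u2)" by algebra
  ultimately have "d1*(u1*y2-u2*y1) = 0" "d2*(u1*y2-u2*y1) = 0" using assms(1,2) by simp_all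
  then show ?thesis using assms(3) by simp
qed

lemma orth_form:
  assumes nc: "\<not> collinear {X, Y, Z}"
    and h1: "inner (H - X) (Y - Z) = 0" and h2: "inner (H - Y) (Z - X) = 0"
  shows "orthocenter X Y Z = H"
  unfolding orthocenter_def
proof (rule the_equality)
  show "inner (H - X) (Y - Z) = 0 \<and> inner (H - Y) (Z - X) = 0" using h1 h2 by simp
next
  fix K assume k: "inner (K - X) (Y - Z) = 0 \<and> inner (K - Y) (Z - X) = 0"
  have n: "cr (X - Y) (Z - Y) \<noteq> 0" using noncol[OF nc] .
  have e1: "(K$1 - H$1)*(Y$1-Z$1) + (K$2-H$2)*(Y$2-Z$2) = 0"
    using h1 k by (simp add: inner2 algebra_simps)
  have e2: "(K$1 - H$1)*(Z$1-X$1) + (K$2-H$2)*(Z$2-X$2) = 0"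
    using h2 k by (simp add: inner2 algebra_simps)
  have e3: "(Y$1-Z$1)*(Z$2-X$2) - (Y$2-Z$2)*(Z$1-X$1) \<noteq> 0"
  proof
    assume "(Y$1-Z$1)*(Z$2-X$2) - (Y$2-Z$2)*(Z$1-X$1) = 0"
    moreover have "cr (X - Y) (Z - Y) = - ((Y$1-Z$1)*(Z$2-X$2) - (Y$2-Z$2)*(Z$1-X$1))"
      by (simp add: cr_def algebra_simps)
    ultimately show False using n by simp
  qed
  have "K$1 - H$1 = 0 \<and> K$2 - H$2 = 0" using lin2[OF e1 e2 e3] .
  then show "K = H" unfolding vec_eq_iff forall_2 by simp
qed

lemma centroid_comp: "(centroid X Y Z)$i = (X$i + Y$i + Z$i)/3"
  by (simp add: centroid_def)

lemma conc_intro: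
  assumes "r > 0" and "\<forall>X\<in>S. (X$1 - zx)^2 + (X$2 - zy)^2 = r^2"
  shows "concyclic S"
  unfolding concyclic_def
proof (intro exI conjI)
  show "r > 0" by fact
  show "\<forall>X\<in>S. dist X (vector [zx, zy]) = r"
    using assms by (simp add: dist2)
qed

lemma circ_pt:
  fixes X1 X2 G1 G2 k y1 y2 p q :: real
  assumes "X1 = G1 + 2/3 * k * y2" "X2 = G2 - 2/3 * k * y1"
    and "-y2 * p + y1 * q = - k * (y1^2+y2^2)/2"
  shows "(X1 - (G1 + 2/3*p))^2 + (X2 - (G2 + 2/3*q))^2 = 4/9*(p^2+q^2)"
proof -
  have "(X1 - (G1 + 2/3*p))^2 + (X2 - (G2 + 2/3*q))^2
     = 4/9*(k^2*(y1^2+y2^2) - 2*k*(y2*p - y1*q) + p^2+q^2)"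
    unfolding assms(1,2) by algebra
  also have "y2*p - y1*q = k * (y1^2+y2^2)/2" using assms(3) by algebra
  finally show ?thesis by algebra
qed


lemma keyid:
  fixes a1 a2 b1 b2 c1 c2 D1 D2 D3 :: real
  assumes n: "D1 \<noteq> 0" "D2 \<noteq> 0" "D3 \<noteq> 0"
  and d: "D1 = a1*b2 - a2*b1" "D2 = b1*c2-b2*c1" "D3 = c1*a2-c2*a1"
  defines "ka \<equiv> - ((b1^2+b2^2 - (b1*a1+b2*a2))/D1/2 - (c1^2+c2^2 - (c1*a1+c2*a2))/D3/2) * (a1^2+a2^2)/2"
  and "kb \<equiv> - ((c1^2+c2^2 - (c1*b1+c2*b2))/D2/2 - (a1^2+a2^2 - (a1*b1+a2*b2))/D1/2) * (b1^2+b2^2)/2"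
  and "kc \<equiv> - ((a1^2+a2^2 - (a1*c1+a2*c2))/D3/2 - (b1^2+b2^2 - (b1*c1+b2*c2))/D2/2) * (c1^2+c2^2)/2"
  shows "-c2 * ((ka*b1 - a1*kb)/D1) + c1 * ((-a2*kb + b2*ka)/D1) = kc"
  unfolding ka_def kb_def kc_def using n
  apply (simp add: field_simps)
  unfolding d by algebra

theorem theorem3p1:
  fixes A B C P :: point
  assumes "\<not> collinear {A, B, C}"
    and "\<not> collinear {B, P, C}"
    and "\<not> collinear {C, P, A}"
    and "\<not> collinear {P, A, B}"
  shows "concyclic
    {centroid A (orthocenter C P A) (orthocenter P A B),
     centroid B (orthocenter P A B) (orthocenter B P C),
     centroid C (orthocenter B P C) (orthocenter C P A),
     centroid A B C}"
proof -
  define a1 where "a1 = A$1 - P$1"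
  define a2 where "a2 = A$2 - P$2"
  define b1 where "b1 = B$1 - P$1"
  define b2 where "b2 = B$2 - P$2"
  define c1 where "c1 = C$1 - P$1"
  define c2 where "c2 = C$2 - P$2"
  define D1 where "D1 = a1*b2 - a2*b1"
  define D2 where "D2 = b1*c2 - b2*c1"
  define D3 where "D3 = c1*a2 - c2*a1"
  have cmp: "A$1 = P$1 + a1" "A$2 = P$2 + a2" "B$1 = P$1 + b1" "B$2 = P$2 + b2"
     "C$1 = P$1 + c1" "C$2 = P$2 + c2"
    by (simp_all add: a1_def a2_def b1_def b2_def c1_def c2_def)
  have nD1: "D1 \<noteq> 0"
  proof -
    have "cr (P - A) (B - A) \<noteq> 0" using noncol[OF assms(4)] .
    moreover have "cr (P - A) (B - A) = - D1" by (simp add: cr_def D1_def cmp algebra_simps)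
    ultimately show ?thesis by simp
  qed
  have nD2: "D2 \<noteq> 0"
  proof -
    have "cr (B - P) (C - P) \<noteq> 0" using noncol[OF assms(2)] .
    moreover have "cr (B - P) (C - P) = D2" by (simp add: cr_def D2_def cmp algebra_simps)
    ultimately show ?thesis by simp
  qed
  have nD3: "D3 \<noteq> 0"
  proof -
    have "cr (C - P) (A - P) \<noteq> 0" using noncol[OF assms(3)] .
    moreover have "cr (C - P) (A - P) = D3" by (simp add: cr_def D3_def cmp algebra_simps)
    ultimately show ?thesis by simp
  qed
  define lA where "lA = -(b1*c1+b2*c2)/D2"
  define lB where "lB = -(c1*a1+c2*a2)/D3"
  define lC where "lC = -(a1*b1+a2*b2)/D1"
  have HA: "orthocenter B P C = vector [P$1 - lA*(c2-b2), P$2 + lA*(c1-b1)]"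
  proof (rule orth_form[OF assms(2)])
    show "inner (vector [P$1 - lA*(c2-b2), P$2 + lA*(c1-b1)] - B) (P - C) = 0"
      using nD2 by (simp add: inner2 cmp lA_def field_simps) (simp add: D2_def algebra_simps)
    show "inner (vector [P$1 - lA*(c2-b2), P$2 + lA*(c1-b1)] - P) (C - B) = 0"
      by (simp add: inner2 cmp algebra_simps)
  qed
  have HB: "orthocenter C P A = vector [P$1 - lB*(a2-c2), P$2 + lB*(a1-c1)]"
  proof (rule orth_form[OF assms(3)])
    show "inner (vector [P$1 - lB*(a2-c2), P$2 + lB*(a1-c1)] - C) (P - A) = 0"
      using nD3 by (simp add: inner2 cmp lB_def field_simps) (simp add: D3_def algebra_simps)
    show "inner (vector [P$1 - lB*(a2-c2), P$2 + lB*(a1-c1)] - P) (A - C) = 0"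
      by (simp add: inner2 cmp algebra_simps)
  qed
  have HC: "orthocenter P A B = vector [P$1 - lC*(b2-a2), P$2 + lC*(b1-a1)]"
  proof (rule orth_form[OF assms(4)])
    show "inner (vector [P$1 - lC*(b2-a2), P$2 + lC*(b1-a1)] - P) (A - B) = 0"
      by (simp add: inner2 cmp algebra_simps)
    show "inner (vector [P$1 - lC*(b2-a2), P$2 + lC*(b1-a1)] - A) (B - P) = 0"
      using nD1 by (simp add: inner2 cmp lC_def field_simps) (unfold D1_def, algebra)
  qed
  define G where "G = centroid A B C"
  define sa where "sa = (b1^2+b2^2 - (b1*a1+b2*a2))/D1/2 - (c1^2+c2^2 - (c1*a1+c2*a2))/D3/2"
  define sb where "sb = (c1^2+c2^2 - (c1*b1+c2*b2))/D2/2 - (a1^2+a2^2 - (a1*b1+a2*b2))/D1/2"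
  define sc where "sc = (a1^2+a2^2 - (a1*c1+a2*c2))/D3/2 - (b1^2+b2^2 - (b1*c1+b2*c2))/D2/2"
  define ka where "ka = - sa * (a1^2+a2^2)/2"
  define kb where "kb = - sb * (b1^2+b2^2)/2"
  define kc where "kc = - sc * (c1^2+c2^2)/2"
  define p where "p = (ka*b1 - a1*kb)/D1"
  define q where "q = (-a2*kb + b2*ka)/D1"
  define GA where "GA = centroid A (orthocenter C P A) (orthocenter P A B)"
  define GB where "GB = centroid B (orthocenter P A B) (orthocenter B P C)"
  define GC where "GC = centroid C (orthocenter B P C) (orthocenter C P A)"
  have G1: "G$1 = P$1 + (a1+b1+c1)/3" "G$2 = P$2 + (a2+b2+c2)/3"
    by (simp_all add: G_def centroid_comp cmp)
  have GA1: "GA$1 = G$1 + 2/3* sa*a2"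
    using nD1 nD3 unfolding GA_def centroid_comp HB HC G1
    by (simp add: cmp sa_def lB_def lC_def field_simps) (unfold D1_def D3_def, algebra)
  have GA2: "GA$2 = G$2 - 2/3* sa*a1"
    using nD1 nD3 unfolding GA_def centroid_comp HB HC G1
    by (simp add: cmp sa_def lB_def lC_def field_simps) (unfold D1_def D3_def, algebra)
  have GB1: "GB$1 = G$1 + 2/3* sb*b2"
    using nD1 nD2 unfolding GB_def centroid_comp HC HA G1
    by (simp add: cmp sb_def lC_def lA_def field_simps) (unfold D1_def D2_def, algebra)
  have GB2: "GB$2 = G$2 - 2/3* sb*b1"
    using nD1 nD2 unfolding GB_def centroid_comp HC HA G1
    by (simp add: cmp sb_def lC_def lA_def field_simps) (unfold D1_def D2_def, algebra)
  have GC1: "GC$1 = G$1 + 2/3* sc*c2"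
    using nD2 nD3 unfolding GC_def centroid_comp HA HB G1
    by (simp add: cmp sc_def lA_def lB_def field_simps) (unfold D2_def D3_def, algebra)
  have GC2: "GC$2 = G$2 - 2/3* sc*c1"
    using nD2 nD3 unfolding GC_def centroid_comp HA HB G1
    by (simp add: cmp sc_def lA_def lB_def field_simps) (unfold D2_def D3_def, algebra)
  have eA: "-a2 * p + a1 * q = ka"
    using nD1 unfolding p_def q_def by (simp add: field_simps) (unfold D1_def, algebra)
  have eB: "-b2 * p + b1 * q = kb"
    using nD1 unfolding p_def q_def by (simp add: field_simps) (unfold D1_def, algebra)
  have eC: "-c2 * p + c1 * q = kc"
    unfolding p_def q_def ka_def kb_def kc_def sa_def sb_def sc_def
    using keyid[OF nD1 nD2 nD3 D1_def D2_def D3_def] by simp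
  have "concyclic {GA, GB, GC, G}"
  proof (cases "p = 0 \<and> q = 0")
    case False
    then have pos: "p^2 + q^2 > 0" by (simp add: sum_power2_gt_zero_iff)
    show ?thesis
    proof (rule conc_intro[where r = "sqrt (4/9*(p^2+q^2))" and zx = "G$1 + 2/3*p" and zy = "G$2 + 2/3*q"])
      show "sqrt (4/9*(p^2+q^2)) > 0" using pos by simp
      have r2: "(sqrt (4/9*(p^2+q^2)))^2 = 4/9*(p^2+q^2)" using pos by simp
      have "(GA$1 - (G$1 + 2/3*p))^2 + (GA$2 - (G$2 + 2/3*q))^2 = 4/9*(p^2+q^2)"
        by (rule circ_pt[OF GA1 GA2]) (insert eA, unfold ka_def, linarith)
      moreover have "(GB$1 - (G$1 + 2/3*p))^2 + (GB$2 - (G$2 + 2/3*q))^2 = 4/9*(p^2+q^2)"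
        by (rule circ_pt[OF GB1 GB2]) (insert eB, unfold kb_def, linarith)
      moreover have "(GC$1 - (G$1 + 2/3*p))^2 + (GC$2 - (G$2 + 2/3*q))^2 = 4/9*(p^2+q^2)"
        by (rule circ_pt[OF GC1 GC2]) (insert eC, unfold kc_def, linarith)
      moreover have "(G$1 - (G$1 + 2/3*p))^2 + (G$2 - (G$2 + 2/3*q))^2 = 4/9*(p^2+q^2)"
        by algebra
      ultimately show "\<forall>X\<in>{GA, GB, GC, G}. (X$1 - (G$1 + 2/3*p))^2 + (X$2 - (G$2 + 2/3*q))^2
          = (sqrt (4/9*(p^2+q^2)))^2" unfolding r2 by simp
    qed
  next
    case True
    have na: "a1^2+a2^2 \<noteq> 0" using nD1 by (auto simp: D1_def)
    have nb: "b1^2+b2^2 \<noteq> 0" using nD1 by (auto simp: D1_def)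
    have nc: "c1^2+c2^2 \<noteq> 0" using nD2 by (auto simp: D2_def)
    have "ka = 0" "kb = 0" "kc = 0" using eA eB eC True by simp_all
    then have z: "sa = 0" "sb = 0" "sc = 0" using na nb nc by (auto simp: ka_def kb_def kc_def)
    show ?thesis
    proof (rule conc_intro[where r = 1 and zx = "G$1 + 1" and zy = "G$2"])
      show "\<forall>X\<in>{GA, GB, GC, G}. (X$1 - (G$1 + 1))^2 + (X$2 - G$2)^2 = 1^2"
        using GA1 GA2 GB1 GB2 GC1 GC2 z by simp
    qed simp
  qed
  then show ?thesis unfolding GA_def GB_def GC_def G_def .
qed

end
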